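(* For any linear $t$-private PIR scheme ($t\ge1$), any file indices $i,i'\in[m]$ and any $\mathcal{F}\subseteq[m]$, $$\mathbb{E}_{\mathbf{q}\sim Q^i}\,|\mathrm{colsupp}(\mathbf{q}[\psi_\alpha(\mathcal{F}),:])|=\mathbb{E}_{\mathbf{q}\sim Q^{i'}}\,|\mathrm{colsupp}(\mathbf{q}[\psi_\alpha(\mathcal{F}),:])|,$$ where the expectations are over the query distributions for files $i$ and $i'$ respectively.
   Context: In a linear PIR scheme with $n$ servers and $m$ files (each with $\alpha$ stripes), the query for file $i$ is a random matrix $Q^i$ with realizations $\mathbf{q}\in\mathbb{F}^{\alpha m\times\beta n}$, and server $j$ receives the columns $\psi_\beta(\{j\})$, where $\psi_\beta(\mathcal{I})=\bigcup_{i\in\mathcal{I}}\{(i-1)\beta+1,\dots,i\beta\}$. Privacy implies in particular that the query received by each single server has the same distribution for every desired index. $\mathbf{q}[\mathcal{I},:]$ is the submatrix of rows $\mathcal{I}$; $\mathrm{colsupp}$ denotes the set of indices of nonzero columns. *)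

theory Defs
  imports "HOL-Probability.Probability"
begin

text \<open>Matrices over a field are functions from (row, column) indices to entries;
  indices are 1-based as in the paper.\<close>
type_synonym 'f matrix = "nat \<Rightarrow> nat \<Rightarrow> 'f"

definition psi :: "nat \<Rightarrow> nat set \<Rightarrow> nat set" where
  "psi b I = (\<Union>i\<in>I. {(i - 1) * b + 1 .. i * b})"

text \<open>Submatrix with rows R and columns C (other entries are set to zero,
  indices are kept).\<close>
definition submat :: "('f::zero) matrix \<Rightarrow> nat set \<Rightarrow> nat set \<Rightarrow> 'f matrix" where
  "submat q R C = (\<lambda>r c. if r \<in> R \<and> c \<in> C then q r c else 0)"

definition colsupp :: "('f::zero) matrix \<Rightarrow> nat \<Rightarrow> nat set" where
  "colsupp q N = {c \<in> {1..N}. \<exists>r. q r c \<noteq> 0}"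

definition query_wf :: "(nat \<Rightarrow> ('f::zero) matrix pmf) \<Rightarrow> nat \<Rightarrow> nat \<Rightarrow> nat \<Rightarrow> nat \<Rightarrow> bool" where
  "query_wf Q m n \<alpha> \<beta> \<longleftrightarrow>
     (\<forall>i\<in>{1..m}. \<forall>q\<in>set_pmf (Q i). \<forall>r c.
        (r \<notin> {1..\<alpha> * m} \<or> c \<notin> {1..\<beta> * n}) \<longrightarrow> q r c = 0)"

text \<open>t-privacy: for every set T of t servers, the joint query received by
  the servers in T (columns psi_beta(T)) has the same distribution for every
  desired file index.\<close>
definition t_private :: "(nat \<Rightarrow> ('f::zero) matrix pmf) \<Rightarrow> nat \<Rightarrow> nat \<Rightarrow> nat \<Rightarrow> nat \<Rightarrow> nat \<Rightarrow> bool" where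
  "t_private Q m n \<alpha> \<beta> t \<longleftrightarrow>
     (\<forall>T. T \<subseteq> {1..n} \<and> card T = t \<longrightarrow>
       (\<forall>i\<in>{1..m}. \<forall>i'\<in>{1..m}.
          map_pmf (\<lambda>q. submat q {1..\<alpha> * m} (psi \<beta> T)) (Q i) =
          map_pmf (\<lambda>q. submat q {1..\<alpha> * m} (psi \<beta> T)) (Q i')))"

end

theory Submission
  imports Defs
begin

lemma card_colsupp_sum:
  "real (card (colsupp (submat q R {1..N}) N)) =
     (\<Sum>c\<in>{1..N}. if \<exists>r\<in>R. q r c \<noteq> 0 then 1 else 0)"
proof -
  have "colsupp (submat q R {1..N}) N = {c\<in>{1..N}. \<exists>r\<in>R. q r c \<noteq> 0}"
    unfolding colsupp_def submat_def by auto
  moreover have "{c\<in>{1..N}. \<exists>r\<in>R. q r c \<noteq> 0} = {1..N} \<inter> {c. \<exists>r\<in>R. q r c \<noteq> 0}" by auto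
  ultimately show ?thesis by (simp add: sum.If_cases)
qed

lemma integrable_ind:
  fixes M :: "'a pmf"
  shows "integrable M (\<lambda>x. if P x then 1 else (0::real))"
  by (rule measure_pmf.integrable_const_bound[where B=1]) auto

lemma psi_sub: "F \<subseteq> {1..m} \<Longrightarrow> psi a F \<subseteq> {1..a * m}"
proof
  fix x assume F: "F \<subseteq> {1..m}" and "x \<in> psi a F"
  then obtain i where i: "i \<in> F" "x \<in> {(i - 1) * a + 1 .. i * a}" unfolding psi_def by auto
  have h: "i * a \<le> m * a" using F i(1) by (auto intro: mult_le_mono1)
  have "x \<le> i * a" "1 \<le> x" using i(2) by auto
  then have "x \<le> m * a" using h by linarith
  then show "x \<in> {1..a * m}" using \<open>1 \<le> x\<close> by (simp add: mult.commute)
qed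

lemma col_in_psi:
  assumes "c \<in> {1..b * n}"
  shows "(c - 1) div b + 1 \<in> {1..n}" "c \<in> psi b {(c - 1) div b + 1}"
proof -
  have b: "b > 0" using assms by (cases b) auto
  have "c - 1 < b * n" using assms by auto
  then have "(c - 1) div b < n" using b
    by (simp add: div_less_iff_less_mult mult.commute)
  then show "(c - 1) div b + 1 \<in> {1..n}" by auto
  have d1: "(c - 1) div b * b \<le> c - 1" by (rule div_times_less_eq_dividend)
  have d2: "c - 1 < ((c - 1) div b + 1) * b"
  proof -
    have m: "(c - 1) mod b < b" using b by simp
    have "c - 1 = (c - 1) div b * b + (c - 1) mod b" by simp
    then have "c - 1 < (c - 1) div b * b + b" using m by linarith
    then show ?thesis by (simp add: algebra_simps)
  qed
  have c1: "1 \<le> c" using assms by simp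
  have lo: "(c - 1) div b * b + 1 \<le> c" using d1 c1 by linarith
  have hi: "c \<le> ((c - 1) div b + 1) * b" using d2 c1 by linarith
  have "c \<in> {((c - 1) div b + 1 - 1) * b + 1 .. ((c - 1) div b + 1) * b}"
    using lo hi by (simp only: atLeastAtMost_iff add_diff_cancel_right')
  then show "c \<in> psi b {(c - 1) div b + 1}" unfolding psi_def by blast
qed

lemma ex_sub:
  assumes "A \<subseteq> B" "c \<in> C"
  shows "(\<exists>r\<in>A. q r c \<noteq> (0::'f::zero)) = (\<exists>r\<in>A. submat q B C r c \<noteq> 0)"
proof -
  have "submat q B C r c = q r c" if "r \<in> A" for r
    using that assms unfolding submat_def by auto
  then show ?thesis by auto
qed

theorem lemma9:
  fixes Q :: "nat \<Rightarrow> ('f::field) matrix pmf"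
    and m n \<alpha> \<beta> t i i' :: nat and F :: "nat set"
  assumes "query_wf Q m n \<alpha> \<beta>"
    and "t_private Q m n \<alpha> \<beta> t"
    and "1 \<le> t" and "t \<le> n"
    and "i \<in> {1..m}" and "i' \<in> {1..m}"
    and "F \<subseteq> {1..m}"
  shows "measure_pmf.expectation (Q i)
           (\<lambda>q. real (card (colsupp (submat q (psi \<alpha> F) {1..\<beta> * n}) (\<beta> * n))))
       = measure_pmf.expectation (Q i')
           (\<lambda>q. real (card (colsupp (submat q (psi \<alpha> F) {1..\<beta> * n}) (\<beta> * n))))"
proof -
  let ?g = "\<lambda>c q. if \<exists>r\<in>psi \<alpha> F. q r c \<noteq> (0::'f) then 1 else (0::real)"
  have key: "measure_pmf.expectation (Q i) (?g c) = measure_pmf.expectation (Q i') (?g c)"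
    if c: "c \<in> {1..\<beta> * n}" for c
  proof -
    define j where "j = (c - 1) div \<beta> + 1"
    have j: "j \<in> {1..n}" "c \<in> psi \<beta> {j}" using col_in_psi[OF c] j_def by auto
    have "t - 1 \<le> card ({1..n} - {j})" using j assms(4) by auto
    then obtain S where S: "S \<subseteq> {1..n} - {j}" "card S = t - 1" "finite S"
      by (rule obtain_subset_with_card_n)
    define T where "T = insert j S"
    have T: "T \<subseteq> {1..n}" "card T = t" using S j assms(3) unfolding T_def by (auto simp: card_insert_if)
    have cT: "c \<in> psi \<beta> T" using j(2) unfolding T_def psi_def by auto
    have eqd: "map_pmf (\<lambda>q. submat q {1..\<alpha> * m} (psi \<beta> T)) (Q i) =
          map_pmf (\<lambda>q. submat q {1..\<alpha> * m} (psi \<beta> T)) (Q i')"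
      using assms(2) T assms(5,6) unfolding t_private_def by blast
    let ?h = "\<lambda>M. if \<exists>r\<in>psi \<alpha> F. M r c \<noteq> (0::'f) then 1 else (0::real)"
    have gh: "?g c q = ?h (submat q {1..\<alpha> * m} (psi \<beta> T))" for q
      by (simp only: ex_sub[OF psi_sub[OF assms(7), of \<alpha>] cT, of q])
    have "measure_pmf.expectation (Q i) (?g c) =
        measure_pmf.expectation (map_pmf (\<lambda>q. submat q {1..\<alpha> * m} (psi \<beta> T)) (Q i)) ?h"
      unfolding integral_map_pmf by (rule arg_cong[where f="measure_pmf.expectation (Q i)"]) (rule ext, rule gh)
    also have "\<dots> = measure_pmf.expectation (map_pmf (\<lambda>q. submat q {1..\<alpha> * m} (psi \<beta> T)) (Q i')) ?h"
      by (simp only: eqd)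
    also have "\<dots> = measure_pmf.expectation (Q i') (?g c)"
      unfolding integral_map_pmf by (rule arg_cong[where f="measure_pmf.expectation (Q i')"]) (rule ext, rule gh[symmetric])
    finally show ?thesis .
  qed
  have E: "measure_pmf.expectation (Q k)
           (\<lambda>q. real (card (colsupp (submat q (psi \<alpha> F) {1..\<beta> * n}) (\<beta> * n))))
        = (\<Sum>c\<in>{1..\<beta> * n}. measure_pmf.expectation (Q k) (?g c))" for k
    by (simp only: card_colsupp_sum, rule Bochner_Integration.integral_sum, rule integrable_ind)
  show ?thesis unfolding E
    by (rule sum.cong[OF refl], rule key, assumption)
qed

end
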